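(* Let $(V,E)$ be a finite graph (multiple edges allowed, no self-loops) whose vertex set is a disjoint union $V=V_\partial\sqcup V_b$, and let $V_\partial=A\sqcup B\sqcup C$. Consider configurations $\{\pi_v\}_{v\in V}$ with $\pi_v\in S_4$, subject to the boundary conditions $\pi_v=\pi^{(1)}=(12)(34)$ for $v\in A$, $\pi_v=\pi^{(2)}=(13)(24)$ for $v\in B$, and $\pi_v=\mathrm{id}$ for $v\in C$, with energy $E(\{\pi_v\})=\sum_{e=(vw)\in E}d(\pi_v,\pi_w)$. Then every such configuration satisfies $E(\{\pi_v\})\ge 2m$, where $m$ is the minimal size $|\gamma_{ABC}|$ of a tripartition for $A,B,C$. If moreover the minimal tripartition $(\Gamma_A,\Gamma_B,\Gamma_C)$ is unique, then equality $E(\{\pi_v\})=2m$ holds if and only if $\pi_v=\pi^{(1)}$ for all $v\in\Gamma_A$, $\pi_v=\pi^{(2)}$ for all $v\in\Gamma_B$, and $\pi_v=\mathrm{id}$ for all $v\in\Gamma_C$.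
   Context: The Cayley distance on $S_n$ is $d(\pi,\sigma)=n-|C(\pi^{-1}\sigma)|$, where $|C(\tau)|$ is the number of disjoint cycles of $\tau$ including fixed points. A tripartition for $A,B,C$ is a partition $V=\Gamma_A\sqcup\Gamma_B\sqcup\Gamma_C$ with $V_\partial\cap\Gamma_A=A$, $V_\partial\cap\Gamma_B=B$, $V_\partial\cap\Gamma_C=C$; its edge set $\gamma_{ABC}$ is the set of edges of $E$ whose endpoints lie in two different parts, and its size is $|\gamma_{ABC}|$. A tripartition is minimal if $|\gamma_{ABC}|$ is minimal among all tripartitions for $A,B,C$. *)

theory Defs
  imports "HOL-Combinatorics.Permutations"
begin

text \<open>Permutations of S_n are modelled as functions nat \<Rightarrow> nat that permute {1..n}.
  The cycles of tau (including fixed points) are its orbits on {1..n}.\<close>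

definition cycles_of :: "nat \<Rightarrow> (nat \<Rightarrow> nat) \<Rightarrow> nat set set" where
  "cycles_of n \<tau> = (\<lambda>x. {y. \<exists>k. (\<tau> ^^ k) x = y}) ` {1..n}"

definition num_cycles :: "nat \<Rightarrow> (nat \<Rightarrow> nat) \<Rightarrow> nat" where
  "num_cycles n \<tau> = card (cycles_of n \<tau>)"

definition cayley_dist :: "nat \<Rightarrow> (nat \<Rightarrow> nat) \<Rightarrow> (nat \<Rightarrow> nat) \<Rightarrow> nat" where
  "cayley_dist n \<pi> \<sigma> = n - num_cycles n (inv \<pi> \<circ> \<sigma>)"

definition pi1 :: "nat \<Rightarrow> nat" where
  "pi1 x = (if x = 1 then 2 else if x = 2 then 1 else if x = 3 then 4 else if x = 4 then 3 else x)"

definition pi2 :: "nat \<Rightarrow> nat" where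
  "pi2 x = (if x = 1 then 3 else if x = 3 then 1 else if x = 2 then 4 else if x = 4 then 2 else x)"

definition multigraph :: "'v set \<Rightarrow> 'e set \<Rightarrow> ('e \<Rightarrow> 'v \<times> 'v) \<Rightarrow> bool" where
  "multigraph V Ed ends \<longleftrightarrow> finite V \<and> finite Ed \<and>
     (\<forall>e\<in>Ed. fst (ends e) \<in> V \<and> snd (ends e) \<in> V \<and> fst (ends e) \<noteq> snd (ends e))"

definition energy :: "'e set \<Rightarrow> ('e \<Rightarrow> 'v \<times> 'v) \<Rightarrow> ('v \<Rightarrow> nat \<Rightarrow> nat) \<Rightarrow> nat" where
  "energy Ed ends \<pi> = (\<Sum>e\<in>Ed. cayley_dist 4 (\<pi> (fst (ends e))) (\<pi> (snd (ends e))))"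

definition tripartition ::
  "'v set \<Rightarrow> 'v set \<Rightarrow> 'v set \<Rightarrow> 'v set \<Rightarrow> 'v set \<Rightarrow> 'v set \<times> 'v set \<times> 'v set \<Rightarrow> bool" where
  "tripartition V Vd A B C T \<longleftrightarrow> (case T of (GA, GB, GC) \<Rightarrow>
     GA \<union> GB \<union> GC = V \<and> GA \<inter> GB = {} \<and> GA \<inter> GC = {} \<and> GB \<inter> GC = {} \<and>
     Vd \<inter> GA = A \<and> Vd \<inter> GB = B \<and> Vd \<inter> GC = C)"

definition same_part :: "'v set \<times> 'v set \<times> 'v set \<Rightarrow> 'v \<Rightarrow> 'v \<Rightarrow> bool" where
  "same_part T x y \<longleftrightarrow> (case T of (GA, GB, GC) \<Rightarrow>
     (x \<in> GA \<and> y \<in> GA) \<or> (x \<in> GB \<and> y \<in> GB) \<or> (x \<in> GC \<and> y \<in> GC))"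

definition cut_edges :: "'e set \<Rightarrow> ('e \<Rightarrow> 'v \<times> 'v) \<Rightarrow> 'v set \<times> 'v set \<times> 'v set \<Rightarrow> 'e set" where
  "cut_edges Ed ends T = {e \<in> Ed. \<not> same_part T (fst (ends e)) (snd (ends e))}"

definition min_tripartition_size ::
  "'v set \<Rightarrow> 'e set \<Rightarrow> ('e \<Rightarrow> 'v \<times> 'v) \<Rightarrow> 'v set \<Rightarrow> 'v set \<Rightarrow> 'v set \<Rightarrow> 'v set \<Rightarrow> nat" where
  "min_tripartition_size V Ed ends Vd A B C =
     Min {card (cut_edges Ed ends T) | T. tripartition V Vd A B C T}"

definition minimal_tripartition ::
  "'v set \<Rightarrow> 'e set \<Rightarrow> ('e \<Rightarrow> 'v \<times> 'v) \<Rightarrow> 'v set \<Rightarrow> 'v set \<Rightarrow> 'v set \<Rightarrow> 'v set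
     \<Rightarrow> 'v set \<times> 'v set \<times> 'v set \<Rightarrow> bool" where
  "minimal_tripartition V Ed ends Vd A B C T \<longleftrightarrow> tripartition V Vd A B C T \<and>
     (\<forall>T'. tripartition V Vd A B C T' \<longrightarrow> card (cut_edges Ed ends T) \<le> card (cut_edges Ed ends T'))"

end

theory Submission
  imports Defs "HOL-Combinatorics.Orbits"
begin

lemma cyc_orbit: "permutation \<tau> \<Longrightarrow> {y. \<exists>k. (\<tau>^^k) x = y} = orbit \<tau> x"
  by (auto simp: orbit_altdef_permutation)

lemma cycles_bound:
  assumes "\<tau> permutes {1..n}"
  shows "2 * num_cycles n \<tau> + card {x\<in>{1..n}. \<tau> x \<noteq> x} \<le> 2 * n"
proof -
  have p: "permutation \<tau>" using assms permutation_permutes by blast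
  define F where "F = {x\<in>{1..n}. \<tau> x = x}"
  define M where "M = {x\<in>{1..n}. \<tau> x \<noteq> x}"
  have O: "cycles_of n \<tau> = orbit \<tau> ` F \<union> orbit \<tau> ` M"
    unfolding cycles_of_def cyc_orbit[OF p] F_def M_def by auto
  have finF: "finite F" and finM: "finite M" unfolding F_def M_def by auto
  have c1: "card (orbit \<tau> ` F) \<le> card F" using card_image_le finF by blast
  have same: "\<And>x y. y \<in> orbit \<tau> x \<Longrightarrow> orbit \<tau> y = orbit \<tau> x"
    using cyclic_on_orbit'[OF p] orbit_cyclic_eq3 by metis
  have self: "\<And>x. x \<in> orbit \<tau> x" using permutation_self_in_orbit[OF p] .
  have sub: "\<And>x. x \<in> M \<Longrightarrow> orbit \<tau> x \<subseteq> M"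
  proof
    fix x y assume x: "x \<in> M" and y: "y \<in> orbit \<tau> x"
    have "y \<in> {1..n}" using permutes_orbit_subset[OF assms] x y unfolding M_def by blast
    moreover have "\<tau> y \<noteq> y"
    proof
      assume "\<tau> y = y"
      then have "orbit \<tau> y = {y}" using orbit_eq_singleton_iff by metis
      then have "orbit \<tau> x = {y}" using same[OF y] by simp
      moreover have "\<tau> x \<in> orbit \<tau> x" by (rule orbit.base)
      ultimately show False using self[of x] x unfolding M_def by auto
    qed
    ultimately show "y \<in> M" unfolding M_def by auto
  qed
  have finO: "\<And>x. x \<in> M \<Longrightarrow> finite (orbit \<tau> x)" using sub finM finite_subset by blast
  have two: "\<And>x. x \<in> M \<Longrightarrow> 2 \<le> card (orbit \<tau> x)"
  proof -
    fix x assume x: "x \<in> M"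
    have "{x, \<tau> x} \<subseteq> orbit \<tau> x" using self[of x] orbit.base[of \<tau> x] by auto
    then have "card {x, \<tau> x} \<le> card (orbit \<tau> x)" using card_mono finO[OF x] by blast
    moreover have "card {x, \<tau> x} = 2" using x unfolding M_def by auto
    ultimately show "2 \<le> card (orbit \<tau> x)" by simp
  qed
  have disj: "pairwise disjnt (orbit \<tau> ` M)"
    unfolding pairwise_def disjnt_def
    by (metis (no_types, lifting) disjoint_iff image_iff same)
  have u: "card (\<Union> (orbit \<tau> ` M)) = sum card (orbit \<tau> ` M)"
    by (rule card_Union_disjoint[OF disj]) (use finO in auto)
  have "2 * card (orbit \<tau> ` M) = (\<Sum>X\<in>orbit \<tau> ` M. 2)" by simp
  also have "\<dots> \<le> sum card (orbit \<tau> ` M)" by (rule sum_mono) (use two in auto)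
  also have "\<dots> \<le> card M" unfolding u[symmetric] by (rule card_mono[OF finM]) (use sub in auto)
  finally have c2: "2 * card (orbit \<tau> ` M) \<le> card M" .
  have "card (cycles_of n \<tau>) \<le> card (orbit \<tau> ` F) + card (orbit \<tau> ` M)"
    unfolding O by (rule card_Un_le)
  moreover have "card F + card M = n"
  proof -
    have "card F + card M = card (F \<union> M)" by (rule card_Un_disjoint[symmetric]) (use finF finM in \<open>auto simp: F_def M_def\<close>)
    also have "F \<union> M = {1..n}" unfolding F_def M_def by auto
    finally show ?thesis by simp
  qed
  ultimately show ?thesis unfolding num_cycles_def M_def[symmetric] using c1 c2 by linarith
qed

lemma dist_lower:
  assumes "\<sigma> permutes {1..4}" "\<sigma>' permutes {1..4}"
  shows "card {j\<in>{1..4}. \<sigma> j \<noteq> \<sigma>' j} \<le> 2 * cayley_dist 4 \<sigma> \<sigma>'"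
proof -
  let ?t = "inv \<sigma> \<circ> \<sigma>'"
  have tp: "?t permutes {1..4}" using assms permutes_compose permutes_inv by blast
  have "\<And>j. ?t j \<noteq> j \<longleftrightarrow> \<sigma> j \<noteq> \<sigma>' j"
    using assms(1) by (metis comp_apply permutes_inverses(1) permutes_inverses(2))
  then have eq: "{j\<in>{1..4}. \<sigma> j \<noteq> \<sigma>' j} = {j\<in>{1..4}. ?t j \<noteq> j}" by auto
  show ?thesis using cycles_bound[OF tp] unfolding eq cayley_dist_def by linarith
qed

lemma invol_bound:
  assumes "\<tau> \<circ> \<tau> = id"
  shows "n \<le> 2 * num_cycles n \<tau>"
proof -
  have orb: "\<And>x k. (\<tau>^^k) x \<in> {x, \<tau> x}"
  proof -
    fix x k show "(\<tau>^^k) x \<in> {x, \<tau> x}"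
    proof (induction k)
      case (Suc k) then show ?case using assms by (auto simp: fun_eq_iff)
    qed simp
  qed
  let ?O = "cycles_of n \<tau>"
  have sub: "\<And>X. X \<in> ?O \<Longrightarrow> X \<subseteq> {x. True} \<and> card X \<le> 2 \<and> finite X"
  proof -
    fix X assume "X \<in> ?O"
    then obtain x where X: "X = {y. \<exists>k. (\<tau>^^k) x = y}" unfolding cycles_of_def by auto
    then have "X \<subseteq> {x, \<tau> x}" using orb by auto
    moreover then have "card X \<le> card {x, \<tau> x}" by (intro card_mono) auto
    moreover have "card {x, \<tau> x} \<le> 2" by (simp add: card_insert_le_m1)
    ultimately show "X \<subseteq> {x. True} \<and> card X \<le> 2 \<and> finite X" using finite_subset by fastforce
  qed
  have cov: "{1..n} \<subseteq> \<Union> ?O"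
  proof
    fix x assume "x \<in> {1..n}"
    then have "{y. \<exists>k. (\<tau>^^k) x = y} \<in> ?O" unfolding cycles_of_def by auto
    moreover have "x \<in> {y. \<exists>k. (\<tau>^^k) x = y}" by (auto intro: exI[of _ 0])
    ultimately show "x \<in> \<Union> ?O" by blast
  qed
  have finO: "finite ?O" unfolding cycles_of_def by auto
  have "n = card {1..n}" by simp
  also have "\<dots> \<le> card (\<Union> ?O)" by (rule card_mono) (use finO sub cov in auto)
  also have "\<dots> \<le> sum card ?O" by (rule card_Union_le_sum_card)
  also have "\<dots> \<le> (\<Sum>X\<in>?O. 2)" by (rule sum_mono) (use sub in auto)
  also have "\<dots> = 2 * num_cycles n \<tau>" unfolding num_cycles_def by simp
  finally show ?thesis .
qed

lemma id_cycles: "num_cycles n id = n"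
proof -
  have "cycles_of n id = (\<lambda>x. {x}) ` {1..n}" unfolding cycles_of_def by auto
  then show ?thesis unfolding num_cycles_def by (simp add: card_image)
qed

lemma dist_self: "\<sigma> permutes S \<Longrightarrow> cayley_dist n \<sigma> \<sigma> = 0"
  unfolding cayley_dist_def by (simp add: permutes_inv_o id_cycles)

lemma pi1_inv: "inv pi1 = pi1" by (rule inv_unique_comp) (auto simp: fun_eq_iff pi1_def)
lemma pi2_inv: "inv pi2 = pi2" by (rule inv_unique_comp) (auto simp: fun_eq_iff pi2_def)

lemma pi1_sq: "pi1 \<circ> pi1 = id" by (auto simp: fun_eq_iff pi1_def)
lemma pi2_sq: "pi2 \<circ> pi2 = id" by (auto simp: fun_eq_iff pi2_def)
lemma pi12_comm: "pi1 \<circ> pi2 = pi2 \<circ> pi1"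
proof
  fix x show "(pi1 \<circ> pi2) x = (pi2 \<circ> pi1) x"
    by (cases "x = 1"; cases "x = 2"; cases "x = 3"; cases "x = 4") (simp_all add: pi1_def pi2_def)
qed
lemma pi12_sq: "(pi1 \<circ> pi2) \<circ> (pi1 \<circ> pi2) = id"
proof -
  have "(pi1 \<circ> pi2) \<circ> (pi1 \<circ> pi2) = pi1 \<circ> (pi2 \<circ> pi1) \<circ> pi2" by (simp add: comp_assoc)
  also have "\<dots> = pi1 \<circ> (pi1 \<circ> pi2) \<circ> pi2" by (simp only: pi12_comm)
  also have "\<dots> = (pi1 \<circ> pi1) \<circ> (pi2 \<circ> pi2)" by (simp only: comp_assoc)
  finally show ?thesis by (simp add: pi1_sq pi2_sq)
qed
lemma pi21_sq: "(pi2 \<circ> pi1) \<circ> (pi2 \<circ> pi1) = id"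
  using pi12_sq pi12_comm by simp

lemma klein_dist:
  assumes "k \<in> {pi1, pi2, id}" "k' \<in> {pi1, pi2, id}"
  shows "cayley_dist 4 k k' \<le> 2"
proof -
  have "(inv k \<circ> k') \<circ> (inv k \<circ> k') = id"
    using assms by (auto simp: pi1_inv pi2_inv pi1_sq pi2_sq pi12_sq pi21_sq)
  from invol_bound[OF this, of 4] show ?thesis unfolding cayley_dist_def by linarith
qed


lemma trip_gen:
  assumes "Vd \<subseteq> V" "Vd = A \<union> B \<union> C"
    and "\<forall>v\<in>A. L v \<in> SA" "\<forall>v\<in>B. L v \<in> SB" "\<forall>v\<in>C. L v \<in> SC"
    and "SA \<inter> SB = {}" "SA \<inter> SC = {}" "SB \<inter> SC = {}" "SA \<union> SB \<union> SC = UNIV"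
  shows "tripartition V Vd A B C ({v\<in>V. L v \<in> SA}, {v\<in>V. L v \<in> SB}, {v\<in>V. L v \<in> SC})"
  using assms unfolding tripartition_def by auto

lemma cut_gen:
  assumes "multigraph V Ed ends" "SA \<union> SB \<union> SC = UNIV"
  shows "cut_edges Ed ends ({v\<in>V. L v \<in> SA}, {v\<in>V. L v \<in> SB}, {v\<in>V. L v \<in> SC})
     \<subseteq> {e\<in>Ed. L (fst (ends e)) \<noteq> L (snd (ends e))}"
  using assms unfolding cut_edges_def same_part_def multigraph_def by auto

lemma cut_le: "finite Ed \<Longrightarrow> card (cut_edges Ed ends T) \<le> card Ed"
  by (rule card_mono) (auto simp: cut_edges_def)

lemma min_le:
  assumes "finite Ed" "tripartition V Vd A B C T"
  shows "min_tripartition_size V Ed ends Vd A B C \<le> card (cut_edges Ed ends T)"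
proof -
  have "{card (cut_edges Ed ends T) | T. tripartition V Vd A B C T} \<subseteq> {..card Ed}"
    using cut_le[OF assms(1)] by blast
  then have "finite {card (cut_edges Ed ends T) | T. tripartition V Vd A B C T}"
    using finite_subset by blast
  moreover have "card (cut_edges Ed ends T) \<in> {card (cut_edges Ed ends T) | T. tripartition V Vd A B C T}"
    unfolding mem_Collect_eq using assms(2) by (intro exI[of _ T] conjI refl)
  ultimately show ?thesis unfolding min_tripartition_size_def by (rule Min_le)
qed

lemma min_attained:
  assumes "finite Ed" "tripartition V Vd A B C T0"
  shows "\<exists>T. tripartition V Vd A B C T \<and> card (cut_edges Ed ends T) = min_tripartition_size V Ed ends Vd A B C"
proof -
  have "{card (cut_edges Ed ends T) | T. tripartition V Vd A B C T} \<subseteq> {..card Ed}"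
    using cut_le[OF assms(1)] by blast
  then have "finite {card (cut_edges Ed ends T) | T. tripartition V Vd A B C T}"
    using finite_subset by blast
  moreover have "{card (cut_edges Ed ends T) | T. tripartition V Vd A B C T} \<noteq> {}"
  proof -
    have "card (cut_edges Ed ends T0) \<in> {card (cut_edges Ed ends T) | T. tripartition V Vd A B C T}"
      unfolding mem_Collect_eq using assms(2) by (intro exI[of _ T0] conjI refl)
    then show ?thesis by blast
  qed
  ultimately have "min_tripartition_size V Ed ends Vd A B C \<in> {card (cut_edges Ed ends T) | T. tripartition V Vd A B C T}"
    unfolding min_tripartition_size_def by (rule Min_in)
  then show ?thesis unfolding mem_Collect_eq by (elim exE conjE) (intro exI conjI, assumption, rule sym)
qed

lemma card_filter_sum: "finite J \<Longrightarrow> card {j\<in>J. P j} = (\<Sum>j\<in>J. if P j then 1 else 0)"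
proof -
  assume "finite J"
  have "card {j\<in>J. P j} = (\<Sum>_\<in>{j\<in>J. P j}. 1::nat)" by simp
  also have "\<dots> = (\<Sum>j\<in>J. if P j then 1 else 0)" by (rule sum.inter_filter) fact
  finally show ?thesis .
qed

lemma pi_distinct: "j \<in> {1..4::nat} \<Longrightarrow> pi1 j \<noteq> pi2 j \<and> pi1 j \<noteq> j \<and> pi2 j \<noteq> j"
proof -
  assume "j \<in> {1..4}"
  then have "j = 1 \<or> j = 2 \<or> j = 3 \<or> j = 4" by auto
  then show ?thesis by (auto simp: pi1_def pi2_def)
qed

lemma pi_out: "j \<notin> {1..4::nat} \<Longrightarrow> pi1 j = j \<and> pi2 j = j"
  by (auto simp: pi1_def pi2_def)

theorem mainTheorem6:
  fixes V Vd Vb A B C :: "'v set" and Ed :: "'e set" and ends :: "'e \<Rightarrow> 'v \<times> 'v"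
    and \<pi> :: "'v \<Rightarrow> nat \<Rightarrow> nat"
  assumes graph: "multigraph V Ed ends"
    and Vsplit: "V = Vd \<union> Vb" "Vd \<inter> Vb = {}"
    and Vdsplit: "Vd = A \<union> B \<union> C" "A \<inter> B = {}" "A \<inter> C = {}" "B \<inter> C = {}"
    and perm: "\<forall>v\<in>V. \<pi> v permutes {1..4}"
    and bA: "\<forall>v\<in>A. \<pi> v = pi1"
    and bB: "\<forall>v\<in>B. \<pi> v = pi2"
    and bC: "\<forall>v\<in>C. \<pi> v = id"
  shows "energy Ed ends \<pi> \<ge> 2 * min_tripartition_size V Ed ends Vd A B C
    \<and> (\<forall>GA GB GC. minimal_tripartition V Ed ends Vd A B C (GA, GB, GC) \<and>
          (\<forall>T. minimal_tripartition V Ed ends Vd A B C T \<longrightarrow> T = (GA, GB, GC)) \<longrightarrow>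
        (energy Ed ends \<pi> = 2 * min_tripartition_size V Ed ends Vd A B C \<longleftrightarrow>
          (\<forall>v\<in>GA. \<pi> v = pi1) \<and> (\<forall>v\<in>GB. \<pi> v = pi2) \<and> (\<forall>v\<in>GC. \<pi> v = id)))"
proof -
  define m where "m = min_tripartition_size V Ed ends Vd A B C"
  have finE: "finite Ed" using graph unfolding multigraph_def by auto
  have endsV: "\<And>e. e \<in> Ed \<Longrightarrow> fst (ends e) \<in> V \<and> snd (ends e) \<in> V"
    using graph unfolding multigraph_def by auto
  have VdV: "Vd \<subseteq> V" using Vsplit by auto
  define D where "D j = {e\<in>Ed. \<pi> (fst (ends e)) j \<noteq> \<pi> (snd (ends e)) j}" for j
  define TA where "TA j = ({v\<in>V. \<pi> v j \<in> - {pi2 j, j}}, {v\<in>V. \<pi> v j \<in> {pi2 j}}, {v\<in>V. \<pi> v j \<in> {j}})" for j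
  define TB where "TB j = ({v\<in>V. \<pi> v j \<in> {pi1 j}}, {v\<in>V. \<pi> v j \<in> - {pi1 j, j}}, {v\<in>V. \<pi> v j \<in> {j}})" for j
  have trA: "tripartition V Vd A B C (TA j)" if j: "j \<in> {1..4}" for j
    unfolding TA_def using pi_distinct[OF j] bA bB bC
    by (intro trip_gen[OF VdV Vdsplit(1), where L="\<lambda>v. \<pi> v j"]) auto
  have trB: "tripartition V Vd A B C (TB j)" if j: "j \<in> {1..4}" for j
    unfolding TB_def using pi_distinct[OF j] bA bB bC
    by (intro trip_gen[OF VdV Vdsplit(1), where L="\<lambda>v. \<pi> v j"]) auto
  have cutA: "cut_edges Ed ends (TA j) \<subseteq> D j" for j
    unfolding TA_def D_def by (rule cut_gen[OF graph, where L="\<lambda>v. \<pi> v j"]) auto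
  have cutB: "cut_edges Ed ends (TB j) \<subseteq> D j" for j
    unfolding TB_def D_def by (rule cut_gen[OF graph, where L="\<lambda>v. \<pi> v j"]) auto
  have finD: "finite (D j)" for j unfolding D_def using finE by auto
  have mD: "m \<le> card (D j)" if j: "j \<in> {1..4}" for j
  proof -
    have "m \<le> card (cut_edges Ed ends (TA j))" unfolding m_def by (rule min_le[OF finE trA[OF j]])
    also have "\<dots> \<le> card (D j)" by (rule card_mono[OF finD cutA])
    finally show ?thesis .
  qed
  have sumD: "(\<Sum>j\<in>{1..4}. card (D j)) \<le> 2 * energy Ed ends \<pi>"
  proof -
    have "(\<Sum>j\<in>{1..4::nat}. card (D j)) =
        (\<Sum>j\<in>{1..4::nat}. \<Sum>e\<in>Ed. if \<pi> (fst (ends e)) j \<noteq> \<pi> (snd (ends e)) j then 1 else 0)"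
      unfolding D_def using finE by (simp add: card_filter_sum)
    also have "\<dots> = (\<Sum>e\<in>Ed. \<Sum>j\<in>{1..4::nat}. if \<pi> (fst (ends e)) j \<noteq> \<pi> (snd (ends e)) j then 1 else 0)"
      by (rule sum.swap)
    also have "\<dots> = (\<Sum>e\<in>Ed. card {j\<in>{1..4::nat}. \<pi> (fst (ends e)) j \<noteq> \<pi> (snd (ends e)) j})"
      by (rule sum.cong[OF refl], rule card_filter_sum[symmetric]) simp
    also have "\<dots> \<le> (\<Sum>e\<in>Ed. 2 * cayley_dist 4 (\<pi> (fst (ends e))) (\<pi> (snd (ends e))))"
    proof (rule sum_mono)
      fix e assume e: "e \<in> Ed"
      show "card {j\<in>{1..4::nat}. \<pi> (fst (ends e)) j \<noteq> \<pi> (snd (ends e)) j}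
          \<le> 2 * cayley_dist 4 (\<pi> (fst (ends e))) (\<pi> (snd (ends e)))"
        by (rule dist_lower) (use perm endsV[OF e] in auto)
    qed
    also have "\<dots> = 2 * energy Ed ends \<pi>" unfolding energy_def by (simp add: sum_distrib_left)
    finally show ?thesis .
  qed
  have m4: "4 * m \<le> (\<Sum>j\<in>{1..4::nat}. card (D j))"
  proof -
    have "4 * m = (\<Sum>j\<in>{1..4::nat}. m)" by simp
    also have "\<dots> \<le> (\<Sum>j\<in>{1..4::nat}. card (D j))" by (rule sum_mono) (use mD in auto)
    finally show ?thesis .
  qed
  have part1: "energy Ed ends \<pi> \<ge> 2 * m" using sumD m4 by linarith
  have eqcase: "card (D j) \<le> m" if eq: "energy Ed ends \<pi> = 2 * m" and j: "j \<in> {1..4}" for j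
  proof -
    have "(\<Sum>j\<in>{1..4::nat}. card (D j)) = card (D j) + (\<Sum>i\<in>{1..4::nat} - {j}. card (D i))"
      by (rule sum.remove) (use j in auto)
    moreover have "3 * m \<le> (\<Sum>i\<in>{1..4::nat} - {j}. card (D i))"
    proof -
      have "3 * m = (\<Sum>i\<in>{1..4::nat} - {j}. m)" using j by simp
      also have "\<dots> \<le> (\<Sum>i\<in>{1..4::nat} - {j}. card (D i))" by (rule sum_mono) (use mD in auto)
      finally show ?thesis .
    qed
    ultimately show ?thesis using sumD eq by linarith
  qed
  have part2: "energy Ed ends \<pi> = 2 * m \<longleftrightarrow>
          (\<forall>v\<in>GA. \<pi> v = pi1) \<and> (\<forall>v\<in>GB. \<pi> v = pi2) \<and> (\<forall>v\<in>GC. \<pi> v = id)"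
    if mt: "minimal_tripartition V Ed ends Vd A B C (GA, GB, GC)"
      and uq: "\<forall>T. minimal_tripartition V Ed ends Vd A B C T \<longrightarrow> T = (GA, GB, GC)" for GA GB GC
  proof -
    have tr: "tripartition V Vd A B C (GA, GB, GC)" using mt unfolding minimal_tripartition_def by auto
    have GV: "GA \<union> GB \<union> GC = V" and disj: "GA \<inter> GB = {}" "GA \<inter> GC = {}" "GB \<inter> GC = {}"
      using tr unfolding tripartition_def by auto
    have mcard: "card (cut_edges Ed ends (GA, GB, GC)) = m"
    proof -
      obtain T where T: "tripartition V Vd A B C T" "card (cut_edges Ed ends T) = m"
        using min_attained[OF finE tr] unfolding m_def by blast
      have all: "\<forall>T'. tripartition V Vd A B C T' \<longrightarrow> card (cut_edges Ed ends (GA, GB, GC)) \<le> card (cut_edges Ed ends T')"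
        using mt unfolding minimal_tripartition_def by blast
      have "card (cut_edges Ed ends (GA, GB, GC)) \<le> m" using all[rule_format, OF T(1)] T(2) by simp
      moreover have "m \<le> card (cut_edges Ed ends (GA, GB, GC))" unfolding m_def by (rule min_le[OF finE tr])
      ultimately show ?thesis by simp
    qed
    have isMin: "T = (GA, GB, GC)" if "tripartition V Vd A B C T" "card (cut_edges Ed ends T) \<le> m" for T
    proof -
      have "minimal_tripartition V Ed ends Vd A B C T"
        unfolding minimal_tripartition_def
      proof (intro conjI allI impI)
        show "tripartition V Vd A B C T" by fact
        fix T' assume "tripartition V Vd A B C T'"
        from min_le[OF finE this, of ends] have "m \<le> card (cut_edges Ed ends T')" unfolding m_def .
        then show "card (cut_edges Ed ends T) \<le> card (cut_edges Ed ends T')" using that(2) by linarith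
      qed
      then show ?thesis using uq by blast
    qed
    show ?thesis
    proof
      assume eq: "energy Ed ends \<pi> = 2 * m"
      have TAe: "TA j = (GA, GB, GC)" and TBe: "TB j = (GA, GB, GC)" if j: "j \<in> {1..4}" for j
      proof -
        have "card (cut_edges Ed ends (TA j)) \<le> m"
          using card_mono[OF finD cutA, of j] eqcase[OF eq j] by linarith
        then show "TA j = (GA, GB, GC)" using isMin trA[OF j] by blast
        have "card (cut_edges Ed ends (TB j)) \<le> m"
          using card_mono[OF finD cutB, of j] eqcase[OF eq j] by linarith
        then show "TB j = (GA, GB, GC)" using isMin trB[OF j] by blast
      qed
      have GAe: "GA = {v\<in>V. \<pi> v j \<in> {pi1 j}}" if j: "j \<in> {1..4}" for j
        using TBe[OF j] unfolding TB_def by simp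
      have GBe: "GB = {v\<in>V. \<pi> v j \<in> {pi2 j}}" if j: "j \<in> {1..4}" for j
        using TAe[OF j] unfolding TA_def by simp
      have GCe: "GC = {v\<in>V. \<pi> v j \<in> {j}}" if j: "j \<in> {1..4}" for j
        using TAe[OF j] unfolding TA_def by simp
      have outside: "\<pi> v j = j" if "v \<in> V" "j \<notin> {1..4}" for v j
        using permutes_not_in[OF perm[rule_format, OF that(1)] that(2)] .
      show "(\<forall>v\<in>GA. \<pi> v = pi1) \<and> (\<forall>v\<in>GB. \<pi> v = pi2) \<and> (\<forall>v\<in>GC. \<pi> v = id)"
      proof (intro conjI ballI ext)
        fix v j assume v: "v \<in> GA"
        show "\<pi> v j = pi1 j"
        proof (cases "j \<in> {1..4}")
          case True then show ?thesis using GAe[OF True] v by simp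
        next
          case False have "v \<in> V" using v GV by blast
          then show ?thesis using outside[OF _ False] pi_out[OF False] by simp
        qed
      next
        fix v j assume v: "v \<in> GB"
        show "\<pi> v j = pi2 j"
        proof (cases "j \<in> {1..4}")
          case True then show ?thesis using GBe[OF True] v by simp
        next
          case False have "v \<in> V" using v GV by blast
          then show ?thesis using outside[OF _ False] pi_out[OF False] by simp
        qed
      next
        fix v j assume v: "v \<in> GC"
        show "\<pi> v j = id j"
        proof (cases "j \<in> {1..4}")
          case True then show ?thesis using GCe[OF True] v by simp
        next
          case False have "v \<in> V" using v GV by blast
          then show ?thesis using outside[OF _ False] by simp
        qed
      qed
    next
      assume cfg: "(\<forall>v\<in>GA. \<pi> v = pi1) \<and> (\<forall>v\<in>GB. \<pi> v = pi2) \<and> (\<forall>v\<in>GC. \<pi> v = id)"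
      have edge: "cayley_dist 4 (\<pi> (fst (ends e))) (\<pi> (snd (ends e)))
          \<le> (if e \<in> cut_edges Ed ends (GA, GB, GC) then 2 else 0)" if e: "e \<in> Ed" for e
      proof -
        have u: "fst (ends e) \<in> V" and w: "snd (ends e) \<in> V" using endsV[OF e] by auto
        have ku: "\<pi> (fst (ends e)) \<in> {pi1, pi2, id}" using u GV cfg by auto
        have kw: "\<pi> (snd (ends e)) \<in> {pi1, pi2, id}" using w GV cfg by auto
        show ?thesis
        proof (cases "e \<in> cut_edges Ed ends (GA, GB, GC)")
          case True then show ?thesis using klein_dist[OF ku kw] by simp
        next
          case False
          then have "same_part (GA, GB, GC) (fst (ends e)) (snd (ends e))"
            using e unfolding cut_edges_def by auto
          then have "\<pi> (fst (ends e)) = \<pi> (snd (ends e))"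
            using cfg unfolding same_part_def by auto
          then show ?thesis using False dist_self[OF perm[rule_format, OF u]] by simp
        qed
      qed
      have "energy Ed ends \<pi> \<le> (\<Sum>e\<in>Ed. if e \<in> cut_edges Ed ends (GA, GB, GC) then 2 else 0)"
        unfolding energy_def by (rule sum_mono) (use edge in auto)
      also have "\<dots> = 2 * card (cut_edges Ed ends (GA, GB, GC))"
      proof -
        have "cut_edges Ed ends (GA, GB, GC) \<subseteq> Ed" unfolding cut_edges_def by auto
        then have "cut_edges Ed ends (GA, GB, GC) = Ed \<inter> cut_edges Ed ends (GA, GB, GC)" by auto
        then show ?thesis using finE
          by (simp add: sum.If_cases del: Int_absorb1)
      qed
      finally show "energy Ed ends \<pi> = 2 * m" using mcard part1 by linarith
    qed
  qed
  show ?thesis unfolding m_def[symmetric]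
  proof (intro conjI allI impI)
    show "2 * m \<le> energy Ed ends \<pi>" by (rule part1)
  next
    fix GA GB GC
    assume H: "minimal_tripartition V Ed ends Vd A B C (GA, GB, GC) \<and>
          (\<forall>T. minimal_tripartition V Ed ends Vd A B C T \<longrightarrow> T = (GA, GB, GC))"
    show "energy Ed ends \<pi> = 2 * m \<longleftrightarrow>
          (\<forall>v\<in>GA. \<pi> v = pi1) \<and> (\<forall>v\<in>GB. \<pi> v = pi2) \<and> (\<forall>v\<in>GC. \<pi> v = id)"
      using H by (elim conjE) (rule part2)
  qed
qed

end
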